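(* Let $G$ be a looped simple graph and $k$ a positive integer. Then $G$ has a transverse circuit of size $k$ if and only if some looped simple graph locally equivalent to $G$ has a vertex of degree $k-1$.
   Context: A looped simple graph is a finite graph in which each vertex carries at most one loop and no two distinct vertices are joined by more than one edge. "Adjacent"/"neighbors" refer only to distinct vertices joined by a non-loop edge; the degree of $v$ is its number of neighbors (loops not counted). $A(G)$ is the $V(G)\times V(G)$ matrix over $GF(2)$ with diagonal entry $1$ exactly at looped vertices and off-diagonal entry $1$ exactly for adjacent pairs. $IAS(G)=(I\mid A(G)\mid A(G)+I)$ over $GF(2)$, rows indexed by $V(G)$; for $v\in V(G)$ the $v$-columns of the three blocks are labelled $\phi_G(v),\chi_G(v),\psi_G(v)$. The isotropic matroid $M[IAS(G)]$ is the binary column matroid of $IAS(G)$ on $W(G)=\{\phi_G(v),\chi_G(v),\psi_G(v):v\in V(G)\}$. The vertex triple of $v$ is $\tau_G(v)=\{\phi_G(v),\chi_G(v),\psi_G(v)\}$. A subtransversal is a subset of $W(G)$ meeting each vertex triple in at most one element; a transverse circuit of $G$ is a circuit of $M[IAS(G)]$ that is a subtransversal. Local equivalence: $G_\ell^v$ is obtained from $G$ by complementing the loop status of $v$; $G_s^v$ by complementing the adjacency status of every pair of distinct neighbors of $v$; $G_{ns}^v$ by doing this and also complementing the loop status of every neighbor of $v$. $H$ is locally equivalent to $G$ if $H$ is obtained from $G$ by a finite sequence of such operations. *)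

theory Defs
  imports Main "HOL-Library.Z2"
begin

text \<open>A looped simple graph on vertex type 'a is represented by its vertex set V
  together with its GF(2) adjacency matrix A(G), viewed as a boolean function:
  A v v = True iff v is looped, and for u ~= v, A u v = True iff u,v adjacent.\<close>

type_synonym 'a lgraph = "'a set \<times> ('a \<Rightarrow> 'a \<Rightarrow> bool)"

definition verts :: "'a lgraph \<Rightarrow> 'a set" where "verts G = fst G"
definition amat :: "'a lgraph \<Rightarrow> 'a \<Rightarrow> 'a \<Rightarrow> bool" where "amat G = snd G"

definition looped_simple_graph :: "'a lgraph \<Rightarrow> bool" where
  "looped_simple_graph G \<longleftrightarrow> finite (verts G)
     \<and> (\<forall>u v. amat G u v = amat G v u)
     \<and> (\<forall>u v. amat G u v \<longrightarrow> u \<in> verts G \<and> v \<in> verts G)"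

definition adjacent :: "'a lgraph \<Rightarrow> 'a \<Rightarrow> 'a \<Rightarrow> bool" where
  "adjacent G u v \<longleftrightarrow> u \<noteq> v \<and> amat G u v"

definition nbhd :: "'a lgraph \<Rightarrow> 'a \<Rightarrow> 'a set" where
  "nbhd G v = {w. adjacent G v w}"

definition degree :: "'a lgraph \<Rightarrow> 'a \<Rightarrow> nat" where
  "degree G v = card (nbhd G v)"

definition loop_comp :: "'a lgraph \<Rightarrow> 'a \<Rightarrow> 'a lgraph" where
  "loop_comp G v = (verts G, \<lambda>x y. if x = v \<and> y = v then \<not> amat G x y else amat G x y)"

definition simple_lc :: "'a lgraph \<Rightarrow> 'a \<Rightarrow> 'a lgraph" where
  "simple_lc G v = (verts G, \<lambda>x y. if x \<noteq> y \<and> x \<in> nbhd G v \<and> y \<in> nbhd G v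
                                     then \<not> amat G x y else amat G x y)"

definition nonsimple_lc :: "'a lgraph \<Rightarrow> 'a \<Rightarrow> 'a lgraph" where
  "nonsimple_lc G v = (verts G, \<lambda>x y. if x \<in> nbhd G v \<and> y \<in> nbhd G v
                                     then \<not> amat G x y else amat G x y)"

inductive locally_equivalent :: "'a lgraph \<Rightarrow> 'a lgraph \<Rightarrow> bool" where
  refl: "locally_equivalent G G"
| loop: "locally_equivalent G H \<Longrightarrow> v \<in> verts H \<Longrightarrow> locally_equivalent G (loop_comp H v)"
| simp: "locally_equivalent G H \<Longrightarrow> v \<in> verts H \<Longrightarrow> locally_equivalent G (simple_lc H v)"
| nsimp: "locally_equivalent G H \<Longrightarrow> v \<in> verts H \<Longrightarrow> locally_equivalent G (nonsimple_lc H v)"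

text \<open>Isotropic matroid: ground set W(G) of labelled columns of IAS(G) = (I | A | A+I) over GF(2).\<close>

datatype 'a iaselem = Phi 'a | Chi 'a | Psi 'a

definition ground :: "'a lgraph \<Rightarrow> 'a iaselem set" where
  "ground G = {Phi v | v. v \<in> verts G} \<union> {Chi v | v. v \<in> verts G} \<union> {Psi v | v. v \<in> verts G}"

definition b :: "bool \<Rightarrow> bit" where "b P = (if P then 1 else 0)"

fun ias_col :: "'a lgraph \<Rightarrow> 'a iaselem \<Rightarrow> 'a \<Rightarrow> bit" where
  "ias_col G (Phi v) u = b (u = v)"
| "ias_col G (Chi v) u = b (amat G u v)"
| "ias_col G (Psi v) u = b (amat G u v) + b (u = v)"

definition ias_dependent :: "'a lgraph \<Rightarrow> 'a iaselem set \<Rightarrow> bool" where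
  "ias_dependent G S \<longleftrightarrow> (\<exists>c :: 'a iaselem \<Rightarrow> bit. (\<exists>e\<in>S. c e \<noteq> 0)
       \<and> (\<forall>u \<in> verts G. (\<Sum>e\<in>S. c e * ias_col G e u) = 0))"

definition ias_circuit :: "'a lgraph \<Rightarrow> 'a iaselem set \<Rightarrow> bool" where
  "ias_circuit G C \<longleftrightarrow> C \<subseteq> ground G \<and> ias_dependent G C
       \<and> (\<forall>D. D \<subset> C \<longrightarrow> \<not> ias_dependent G D)"

definition vertex_triple :: "'a \<Rightarrow> 'a iaselem set" where
  "vertex_triple v = {Phi v, Chi v, Psi v}"

definition subtransversal :: "'a lgraph \<Rightarrow> 'a iaselem set \<Rightarrow> bool" where
  "subtransversal G S \<longleftrightarrow> S \<subseteq> ground G \<and> (\<forall>v \<in> verts G. card (S \<inter> vertex_triple v) \<le> 1)"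

definition transverse_circuit :: "'a lgraph \<Rightarrow> 'a iaselem set \<Rightarrow> bool" where
  "transverse_circuit G C \<longleftrightarrow> ias_circuit G C \<and> subtransversal G C"

end

theory Submission
  imports Defs
begin

declare add_bit_eq_xor[simp del] mult_bit_eq_and[simp del]

lemma b_add[simp]: "b P + b Q = b (P \<noteq> Q)" by (simp add: b_def)
lemma b_mult[simp]: "b P * b Q = b (P \<and> Q)" by (simp add: b_def)
lemma b_eq0[simp]: "b P = 0 \<longleftrightarrow> \<not> P" by (simp add: b_def)
lemma b_eq1[simp]: "b P = 1 \<longleftrightarrow> P" by (simp add: b_def)
lemma b_eq[simp]: "b P = b Q \<longleftrightarrow> (P \<longleftrightarrow> Q)" by (simp add: b_def)
lemma b_sum: "finite S \<Longrightarrow> (\<Sum>w\<in>S. b (u = w)) = b (u \<in> S)"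
proof (induction S rule: finite_induct)
  case (insert x F) then show ?case by (auto simp: b_def)
qed (simp add: b_def)

fun vtx :: "'a iaselem \<Rightarrow> 'a" where
  "vtx (Phi v) = v" | "vtx (Chi v) = v" | "vtx (Psi v) = v"

lemma ground_vtx: "e \<in> ground G \<longleftrightarrow> vtx e \<in> verts G"
  by (cases e) (auto simp: ground_def)

lemma triple_vtx: "e \<in> vertex_triple x \<longleftrightarrow> vtx e = x"
  by (cases e) (auto simp: vertex_triple_def)

lemma finite_ground: "finite (verts G) \<Longrightarrow> finite (ground G)"
  unfolding ground_def by auto

lemma transfer_dep:
  assumes cond: "\<forall>e\<in>S. \<forall>u\<in>verts G. ias_col G (\<sigma> e) u = ias_col G' e u + n u * ias_col G' e v"
    and v: "v \<in> verts G'" and V: "verts G' = verts G" and inj: "inj_on \<sigma> S"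
    and dep: "ias_dependent G' S"
  shows "ias_dependent G (\<sigma> ` S)"
proof -
  obtain c where c1: "\<exists>e\<in>S. c e \<noteq> 0" and c2: "\<forall>u \<in> verts G'. (\<Sum>e\<in>S. c e * ias_col G' e u) = 0"
    using dep unfolding ias_dependent_def by blast
  define c' where "c' x = c (the_inv_into S \<sigma> x)" for x
  have c'e: "c' (\<sigma> e) = c e" if "e \<in> S" for e
    using that inj by (simp add: c'_def the_inv_into_f_f)
  show ?thesis unfolding ias_dependent_def
  proof (intro exI conjI ballI)
    show "\<exists>e\<in>\<sigma> ` S. c' e \<noteq> 0" using c1 c'e by auto
  next
    fix u assume u: "u \<in> verts G"
    have "(\<Sum>x\<in>\<sigma> ` S. c' x * ias_col G x u) = (\<Sum>e\<in>S. c' (\<sigma> e) * ias_col G (\<sigma> e) u)"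
      using inj by (simp add: sum.reindex)
    also have "\<dots> = (\<Sum>e\<in>S. c e * ias_col G' e u + n u * (c e * ias_col G' e v))"
      using cond u c'e by (intro sum.cong) (auto simp: algebra_simps)
    also have "\<dots> = (\<Sum>e\<in>S. c e * ias_col G' e u) + n u * (\<Sum>e\<in>S. c e * ias_col G' e v)"
      by (simp add: sum.distrib sum_distrib_left)
    also have "\<dots> = 0" using c2 u v V by simp
    finally show "(\<Sum>x\<in>\<sigma> ` S. c' x * ias_col G x u) = 0" .
  qed
qed


lemma transfer_tc:
  assumes inv: "\<And>e. \<sigma> (\<sigma> e) = e" and vt: "\<And>e. vtx (\<sigma> e) = vtx e"
    and V: "verts G' = verts G" and v: "v \<in> verts G"
    and cA: "\<forall>e\<in>ground G'. \<forall>u\<in>verts G. ias_col G (\<sigma> e) u = ias_col G' e u + n u * ias_col G' e v"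
    and cB: "\<forall>e\<in>ground G. \<forall>u\<in>verts G'. ias_col G' (\<sigma> e) u = ias_col G e u + n' u * ias_col G e v"
    and tc: "transverse_circuit G' C"
  shows "transverse_circuit G (\<sigma> ` C) \<and> card (\<sigma> ` C) = card C"
proof -
  have inj: "inj_on \<sigma> A" for A by (metis inj_onI inv)
  have gr: "\<sigma> ` A \<subseteq> ground G \<longleftrightarrow> A \<subseteq> ground G'" for A
    unfolding image_subset_iff by (simp add: subset_iff ground_vtx vt V Ball_def)
  have C: "C \<subseteq> ground G'" "ias_dependent G' C" "\<forall>D. D \<subset> C \<longrightarrow> \<not> ias_dependent G' D"
    "\<forall>x \<in> verts G'. card (C \<inter> vertex_triple x) \<le> 1"
    using tc unfolding transverse_circuit_def ias_circuit_def subtransversal_def by auto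
  have d: "ias_dependent G (\<sigma> ` C)"
    by (rule transfer_dep[OF _ _ V inj C(2)]) (use cA C(1) v V in auto)
  have ii: "\<sigma> ` \<sigma> ` X = X" for X by (simp add: image_image inv)
  have m: "\<not> ias_dependent G D" if D: "D \<subset> \<sigma> ` C" for D
  proof
    assume dD: "ias_dependent G D"
    have "D \<subseteq> ground G" using D C(1) gr by blast
    then have "ias_dependent G' (\<sigma> ` D)"
      by (intro transfer_dep[OF _ _ V[symmetric] inj dD]) (use cB v V in auto)
    moreover have "\<sigma> ` D \<subset> C"
    proof -
      have "\<sigma> ` D \<subseteq> \<sigma> ` \<sigma> ` C" using D by (intro image_mono) blast
      then have 1: "\<sigma> ` D \<subseteq> C" by (simp only: ii)
      have "\<sigma> ` D \<noteq> C"
      proof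
        assume "\<sigma> ` D = C"
        then have "\<sigma> ` \<sigma> ` D = \<sigma> ` C" by simp
        then show False using D by (simp only: ii)
      qed
      with 1 show ?thesis by blast
    qed
    ultimately show False using C(3) by blast
  qed
  have st: "card (\<sigma> ` C \<inter> vertex_triple x) \<le> 1" if "x \<in> verts G" for x
  proof -
    have "\<sigma> ` C \<inter> vertex_triple x = \<sigma> ` (C \<inter> vertex_triple x)"
    proof -
      have T: "\<sigma> ` vertex_triple x = vertex_triple x"
      proof
        show "\<sigma> ` vertex_triple x \<subseteq> vertex_triple x" by (auto simp: triple_vtx vt)
        show "vertex_triple x \<subseteq> \<sigma> ` vertex_triple x"
        proof
          fix e assume "e \<in> vertex_triple x"
          then have "\<sigma> e \<in> vertex_triple x" by (simp add: triple_vtx vt)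
          then show "e \<in> \<sigma> ` vertex_triple x" using inv[of e] by (metis image_eqI)
        qed
      qed
      have "inj \<sigma>" using inj by blast
      then show ?thesis by (simp add: image_Int T)
    qed
    then have "card (\<sigma> ` C \<inter> vertex_triple x) = card (C \<inter> vertex_triple x)"
      by (simp add: card_image[OF inj])
    then show ?thesis using C(4) V that by simp
  qed
  have "\<sigma> ` C \<subseteq> ground G" using C(1) gr by blast
  then show ?thesis
    using d m st
    unfolding transverse_circuit_def ias_circuit_def subtransversal_def
    by (simp add: card_image[OF inj])
qed

definition sw :: "'a \<Rightarrow> 'a \<Rightarrow> 'a \<Rightarrow> 'a" where
  "sw a c e = (if e = a then c else if e = c then a else e)"

definition ns_sig :: "'a lgraph \<Rightarrow> 'a \<Rightarrow> 'a iaselem \<Rightarrow> 'a iaselem" where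
  "ns_sig G v = (if amat G v v then sw (Phi v) (Chi v) else sw (Phi v) (Psi v))"

definition s_sig :: "'a lgraph \<Rightarrow> 'a \<Rightarrow> 'a iaselem \<Rightarrow> 'a iaselem" where
  "s_sig G v e = (if vtx e = v then ns_sig G v e else if vtx e \<in> nbhd G v
      then sw (Chi (vtx e)) (Psi (vtx e)) e else e)"

lemma lsg_sym: "looped_simple_graph G \<Longrightarrow> amat G u v = amat G v u"
  by (simp add: looped_simple_graph_def)
lemma lsg_in: "looped_simple_graph G \<Longrightarrow> amat G u v \<Longrightarrow> u \<in> verts G \<and> v \<in> verts G"
  unfolding looped_simple_graph_def by blast

lemma verts_ops[simp]: "verts (loop_comp G v) = verts G" "verts (simple_lc G v) = verts G"
  "verts (nonsimple_lc G v) = verts G"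
  by (simp_all add: verts_def loop_comp_def simple_lc_def nonsimple_lc_def)

lemma amat_ops:
  "amat (loop_comp G v) x y = (if x = v \<and> y = v then \<not> amat G x y else amat G x y)"
  "amat (simple_lc G v) x y = (if x \<noteq> y \<and> x \<in> nbhd G v \<and> y \<in> nbhd G v then \<not> amat G x y else amat G x y)"
  "amat (nonsimple_lc G v) x y = (if x \<in> nbhd G v \<and> y \<in> nbhd G v then \<not> amat G x y else amat G x y)"
  by (simp_all add: amat_def loop_comp_def simple_lc_def nonsimple_lc_def)

lemma nbhd_iff: "w \<in> nbhd G v \<longleftrightarrow> v \<noteq> w \<and> amat G v w"
  by (simp add: nbhd_def adjacent_def)

lemma sw_inv: "sw a c (sw a c e) = e" by (simp add: sw_def)

lemma lsg_ops:
  assumes "looped_simple_graph G" "v \<in> verts G"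
  shows "looped_simple_graph (loop_comp G v)" "looped_simple_graph (simple_lc G v)"
    "looped_simple_graph (nonsimple_lc G v)"
  using assms unfolding looped_simple_graph_def
  by (auto simp: amat_ops nbhd_iff)

lemma cond_loop:
  assumes "looped_simple_graph G"
  shows "ias_col G (sw (Chi v) (Psi v) e) u = ias_col (loop_comp G v) e u + 0 * ias_col (loop_comp G v) e v"
    "ias_col (loop_comp G v) (sw (Chi v) (Psi v) e) u = ias_col G e u + 0 * ias_col G e v"
  by (cases e; auto simp: sw_def amat_ops)+

lemma cond_ns:
  assumes "looped_simple_graph G"
  shows "ias_col G (ns_sig G v e) u = ias_col (nonsimple_lc G v) e u
           + b (u \<in> nbhd G v) * ias_col (nonsimple_lc G v) e v"
    "ias_col (nonsimple_lc G v) (ns_sig G v e) u = ias_col G e u + b (u \<in> nbhd G v) * ias_col G e v"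
  using lsg_sym[OF assms]
  by (cases e; auto simp: sw_def amat_ops ns_sig_def nbhd_iff)+


lemma cond_s:
  assumes "looped_simple_graph G"
  shows "ias_col G (s_sig G v e) u = ias_col (simple_lc G v) e u
           + b (u \<in> nbhd G v) * ias_col (simple_lc G v) e v"
    "ias_col (simple_lc G v) (s_sig G v e) u = ias_col G e u + b (u \<in> nbhd G v) * ias_col G e v"
  using lsg_sym[OF assms]
  by (cases e; auto simp: sw_def amat_ops ns_sig_def s_sig_def nbhd_iff)+


lemma vtx_sw: "vtx (sw (Chi v) (Psi v) e) = vtx e"
  by (auto simp: sw_def)
lemma ns_sig_props: "ns_sig G v (ns_sig G v e) = e" "vtx (ns_sig G v e) = vtx e"
  by (auto simp: ns_sig_def sw_def)
lemma s_sig_vtx: "vtx (s_sig G v e) = vtx e"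
  by (auto simp: s_sig_def ns_sig_props vtx_sw)
lemma s_sig_inv: "s_sig G v (s_sig G v e) = e"
  by (cases e) (auto simp: s_sig_def ns_sig_def sw_def)

lemma transfer_both:
  assumes inv: "\<And>e. \<sigma> (\<sigma> e) = e" and vt: "\<And>e. vtx (\<sigma> e) = vtx e"
    and V: "verts G' = verts G" and v: "v \<in> verts G"
    and c1: "\<And>e u. ias_col G (\<sigma> e) u = ias_col G' e u + n u * ias_col G' e v"
    and c2: "\<And>e u. ias_col G' (\<sigma> e) u = ias_col G e u + n u * ias_col G e v"
  shows "(transverse_circuit G' C \<longrightarrow> transverse_circuit G (\<sigma> ` C) \<and> card (\<sigma> ` C) = card C) \<and>
    (transverse_circuit G C \<longrightarrow> transverse_circuit G' (\<sigma> ` C) \<and> card (\<sigma> ` C) = card C)"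
proof (rule conjI; rule impI)
  assume t: "transverse_circuit G' C"
  show "transverse_circuit G (\<sigma> ` C) \<and> card (\<sigma> ` C) = card C"
    by (rule transfer_tc[where n=n and n'=n, OF inv vt V v _ _ t]) (simp_all add: c1 c2)
next
  assume t: "transverse_circuit G C"
  show "transverse_circuit G' (\<sigma> ` C) \<and> card (\<sigma> ` C) = card C"
    by (rule transfer_tc[where n=n and n'=n and v=v, OF inv vt V[symmetric] _ _ _ t]) (use v V in \<open>simp_all add: c1 c2\<close>)
qed

lemma tc_loop:
  assumes "looped_simple_graph G" "v \<in> verts G"
  shows "(transverse_circuit (loop_comp G v) C \<longrightarrow> transverse_circuit G (sw (Chi v) (Psi v) ` C) \<and> card (sw (Chi v) (Psi v) ` C) = card C) \<and>
    (transverse_circuit G C \<longrightarrow> transverse_circuit (loop_comp G v) (sw (Chi v) (Psi v) ` C) \<and> card (sw (Chi v) (Psi v) ` C) = card C)"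
  by (rule transfer_both[where \<sigma>="sw (Chi v) (Psi v)" and v=v and n="\<lambda>_. 0"])
     (simp_all add: sw_inv vtx_sw assms cond_loop[OF assms(1)])

lemma tc_ns:
  assumes "looped_simple_graph G" "v \<in> verts G"
  shows "(transverse_circuit (nonsimple_lc G v) C \<longrightarrow> transverse_circuit G (ns_sig G v ` C) \<and> card (ns_sig G v ` C) = card C) \<and>
    (transverse_circuit G C \<longrightarrow> transverse_circuit (nonsimple_lc G v) (ns_sig G v ` C) \<and> card (ns_sig G v ` C) = card C)"
  by (rule transfer_both[where \<sigma>="ns_sig G v" and v=v and n="\<lambda>u. b (u \<in> nbhd G v)"])
     (simp_all only: ns_sig_props assms cond_ns[OF assms(1)] verts_ops)

lemma tc_s:
  assumes "looped_simple_graph G" "v \<in> verts G"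
  shows "(transverse_circuit (simple_lc G v) C \<longrightarrow> transverse_circuit G (s_sig G v ` C) \<and> card (s_sig G v ` C) = card C)"
proof -
  have "(transverse_circuit (simple_lc G v) C \<longrightarrow> transverse_circuit G (s_sig G v ` C) \<and> card (s_sig G v ` C) = card C) \<and>
    (transverse_circuit G C \<longrightarrow> transverse_circuit (simple_lc G v) (s_sig G v ` C) \<and> card (s_sig G v ` C) = card C)"
  by (rule transfer_both[where \<sigma>="s_sig G v" and v=v and n="\<lambda>u. b (u \<in> nbhd G v)"])
     (simp_all only: s_sig_inv s_sig_vtx assms cond_s[OF assms(1)] verts_ops)
  then show ?thesis by blast
qed

lemma le_lsg: "locally_equivalent G H \<Longrightarrow> looped_simple_graph G \<Longrightarrow> looped_simple_graph H \<and> verts H = verts G"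
  by (induction rule: locally_equivalent.induct) (auto simp: lsg_ops)

lemma le_trans: "locally_equivalent H K \<Longrightarrow> locally_equivalent G H \<Longrightarrow> locally_equivalent G K"
  by (induction rule: locally_equivalent.induct) (auto intro: locally_equivalent.intros)

lemma le_back:
  assumes "locally_equivalent G H" "looped_simple_graph G" "transverse_circuit H C"
  shows "\<exists>C'. transverse_circuit G C' \<and> card C' = card C"
  using assms
proof (induction arbitrary: C rule: locally_equivalent.induct)
  case (refl G) then show ?case by blast
next
  case (loop G H v)
  have H: "looped_simple_graph H" using le_lsg loop by blast
  show ?case using tc_loop[OF H loop(2)] loop by metis
next
  case (simp G H v)
  have H: "looped_simple_graph H" using le_lsg simp by blast
  show ?case using tc_s[OF H simp(2)] simp by metis
next
  case (nsimp G H v)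
  have H: "looped_simple_graph H" using le_lsg nsimp by blast
  show ?case using tc_ns[OF H nsimp(2)] nsimp by metis
qed

lemma lsg_finite_nbhd: "looped_simple_graph G \<Longrightarrow> nbhd G v \<subseteq> verts G \<and> finite (nbhd G v)"
  unfolding looped_simple_graph_def nbhd_iff by (meson finite_subset nbhd_iff subsetI)

lemma row_val:
  assumes "finite D" "D \<subseteq> insert c0 (Phi ` N)" "\<And>x. c0 \<noteq> Phi x"
  shows "(\<Sum>e\<in>D. c e * ias_col G e u) = (if c0 \<in> D then c c0 * ias_col G c0 u else 0)
           + (if Phi u \<in> D then c (Phi u) else 0)"
proof -
  have fin: "finite (D - {c0})" using assms by simp
  have "(\<Sum>e\<in>D. c e * ias_col G e u) = (\<Sum>e\<in>D \<inter> {c0}. c e * ias_col G e u) + (\<Sum>e\<in>D - {c0}. c e * ias_col G e u)"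
    by (rule sum.Int_Diff[OF assms(1)])
  also have "(\<Sum>e\<in>D \<inter> {c0}. c e * ias_col G e u) = (if c0 \<in> D then c c0 * ias_col G c0 u else 0)"
    by (cases "c0 \<in> D") (auto simp: Int_insert_right)
  also have "(\<Sum>e\<in>D - {c0}. c e * ias_col G e u) = (\<Sum>e\<in>D - {c0}. if e = Phi u then c e else 0)"
  proof (rule sum.cong)
    fix e assume "e \<in> D - {c0}"
    then obtain x where "e = Phi x" using assms(2) by blast
    then show "c e * ias_col G e u = (if e = Phi u then c e else 0)" by (auto simp: b_def)
  qed simp
  also have "\<dots> = (if Phi u \<in> D then c (Phi u) else 0)"
    using fin assms(3) by (simp add: sum.delta') (metis assms(3))
  finally show ?thesis .
qed

definition c0of :: "'a lgraph \<Rightarrow> 'a \<Rightarrow> 'a iaselem" where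
  "c0of H v = (if amat H v v then Psi v else Chi v)"

lemma c0of_col: "looped_simple_graph H \<Longrightarrow> ias_col H (c0of H v) u = b (u \<in> nbhd H v)"
  using lsg_sym[of H u v] by (auto simp: c0of_def nbhd_iff)

lemma card_le1: "A \<subseteq> {a} \<Longrightarrow> card A \<le> 1"
  using card_mono[of "{a}" A] by simp

lemma nbhd_circuit:
  assumes H: "looped_simple_graph H" and v: "v \<in> verts H"
  shows "transverse_circuit H (insert (c0of H v) (Phi ` nbhd H v)) \<and>
         card (insert (c0of H v) (Phi ` nbhd H v)) = degree H v + 1"
proof -
  define N where "N = nbhd H v"
  define c0 where "c0 = c0of H v"
  define C where "C = insert c0 (Phi ` N)"
  have NV: "N \<subseteq> verts H" "finite N" using lsg_finite_nbhd[OF H] by (auto simp: N_def)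
  have vN: "v \<notin> N" by (simp add: N_def nbhd_iff)
  have c0P: "c0 \<noteq> Phi x" for x by (simp add: c0_def c0of_def)
  have c0c: "ias_col H c0 u = b (u \<in> N)" for u using c0of_col[OF H] by (simp add: c0_def N_def)
  have finC: "finite C" using NV by (simp add: C_def)
  have rv: "(\<Sum>e\<in>D. c e * ias_col H e u) = (if c0 \<in> D then c c0 * b (u \<in> N) else 0)
           + (if Phi u \<in> D then c (Phi u) else 0)" if "D \<subseteq> C" for D c u
    using row_val[where c=c and u=u and G=H and N=N, OF finite_subset[OF that finC] _ c0P] that by (simp add: C_def c0c)
  have gr: "C \<subseteq> ground H" using NV v by (auto simp: C_def ground_vtx c0_def c0of_def)
  have dep: "ias_dependent H C"
    unfolding ias_dependent_def
  proof (intro exI[of _ "\<lambda>_. 1"] conjI ballI)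
    show "\<exists>e\<in>C. (1::bit) \<noteq> 0" by (rule bexI[of _ c0]) (simp_all add: C_def)
    fix u assume "u \<in> verts H"
    have PC: "Phi u \<in> C \<longleftrightarrow> u \<in> N" using c0P[of u] by (auto simp: C_def)
    have "c0 \<in> C" by (simp add: C_def)
    then show "(\<Sum>e\<in>C. 1 * ias_col H e u) = 0" using rv[of C "\<lambda>_. 1" u] PC
      by (simp add: b_def)
  qed
  have mini: "\<not> ias_dependent H D" if D: "D \<subset> C" for D
  proof
    assume "ias_dependent H D"
    then obtain c where c1: "\<exists>e\<in>D. c e \<noteq> 0" and c2: "\<forall>u\<in>verts H. (\<Sum>e\<in>D. c e * ias_col H e u) = 0"
      unfolding ias_dependent_def by blast
    have row: "\<And>u. u \<in> verts H \<Longrightarrow> (if c0 \<in> D then c c0 * b (u \<in> N) else 0)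
           + (if Phi u \<in> D then c (Phi u) else 0) = 0"
    proof -
      fix u assume u: "u \<in> verts H"
      have "D \<subseteq> C" using D by blast
      from rv[OF this, of c u] c2 u show "?thesis u" by simp
    qed
    have cc0: "c0 \<in> D \<Longrightarrow> c c0 = 0"
    proof -
      assume "c0 \<in> D"
      then obtain w where w: "w \<in> N" "Phi w \<notin> D" using D by (auto simp: C_def)
      then show "c c0 = 0" using row[of w] NV \<open>c0 \<in> D\<close> by auto
    qed
    have "c e = 0" if e: "e \<in> D" for e
    proof (cases "e = c0")
      case True then show ?thesis using cc0 e by simp
    next
      case False
      then obtain x where x: "e = Phi x" "x \<in> N" using e D by (auto simp: C_def)
      then have "x \<noteq> v" using vN by auto
      have "(if c0 \<in> D then c c0 * b (x \<in> N) else 0) = 0" using cc0 by auto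
      then show ?thesis using row[of x] x NV e by auto
    qed
    then show False using c1 by blast
  qed
  have st: "card (C \<inter> vertex_triple x) \<le> 1" for x
  proof (cases "x = v")
    case True
    then have "C \<inter> vertex_triple x \<subseteq> {c0}" using vN by (auto simp: C_def triple_vtx)
    then show ?thesis by (rule card_le1)
  next
    case False
    then have "C \<inter> vertex_triple x \<subseteq> {Phi x}" by (auto simp: C_def triple_vtx c0_def c0of_def)
    then show ?thesis by (rule card_le1)
  qed
  have "card C = card N + 1"
    using NV c0P by (simp add: C_def card_image inj_on_def image_iff)
  moreover have "transverse_circuit H C"
    using dep mini st gr unfolding transverse_circuit_def ias_circuit_def subtransversal_def
    by blast
  ultimately show ?thesis by (simp add: C_def c0_def N_def degree_def)
qed

definition is_phi :: "'a iaselem \<Rightarrow> bool" where "is_phi e \<longleftrightarrow> (\<exists>x. e = Phi x)"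

definition bad :: "'a \<Rightarrow> 'a iaselem set \<Rightarrow> 'a set" where
  "bad v C = vtx ` {e \<in> C. vtx e \<noteq> v \<and> \<not> is_phi e}"

lemma tc_finite: "looped_simple_graph H \<Longrightarrow> transverse_circuit H C \<Longrightarrow> finite C"
proof -
  assume H: "looped_simple_graph H" and tc: "transverse_circuit H C"
  have "finite (ground H)" using H by (intro finite_ground) (simp add: looped_simple_graph_def)
  moreover have "C \<subseteq> ground H" using tc unfolding transverse_circuit_def ias_circuit_def by blast
  ultimately show "finite C" by (rule finite_subset[rotated])
qed

lemma tc_ground: "transverse_circuit H C \<Longrightarrow> C \<subseteq> ground H"
  unfolding transverse_circuit_def ias_circuit_def by blast

lemma tc_uniq:
  assumes "looped_simple_graph H" "transverse_circuit H C" "e \<in> C" "f \<in> C" "vtx e = vtx f"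
  shows "e = f"
proof (rule ccontr)
  assume ne: "e \<noteq> f"
  have x: "vtx e \<in> verts H" using tc_ground[OF assms(2)] assms(3) ground_vtx by blast
  have "card (C \<inter> vertex_triple (vtx e)) \<le> 1"
    using assms(2) x unfolding transverse_circuit_def subtransversal_def by blast
  moreover have "{e, f} \<subseteq> C \<inter> vertex_triple (vtx e)" using assms by (auto simp: triple_vtx)
  moreover have "finite (C \<inter> vertex_triple (vtx e))" using tc_finite[OF assms(1,2)] by simp
  ultimately have "card {e, f} \<le> 1" using card_mono[of "C \<inter> vertex_triple (vtx e)" "{e,f}"] by linarith
  then show False using ne by simp
qed

lemma bad_mono:
  assumes vt: "\<And>e. vtx (\<sigma> e) = vtx e" and h: "\<forall>e\<in>C. \<sigma> e = e \<or> is_phi (\<sigma> e)"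
  shows "bad v (\<sigma> ` C) \<subseteq> bad v C"
proof
  fix x assume "x \<in> bad v (\<sigma> ` C)"
  then obtain e where e: "e \<in> C" "vtx (\<sigma> e) = x" "x \<noteq> v" "\<not> is_phi (\<sigma> e)"
    unfolding bad_def by auto
  then have "\<sigma> e = e" using h by blast
  then show "x \<in> bad v C" using e unfolding bad_def by (intro image_eqI[of _ _ e]) auto
qed

lemma bad_remove:
  assumes vt: "\<And>e. vtx (\<sigma> e) = vtx e" and h: "\<forall>e\<in>C. vtx e = y \<longrightarrow> is_phi (\<sigma> e)"
  shows "y \<notin> bad v (\<sigma> ` C)"
  using assms unfolding bad_def by auto

lemma ns_sig_cases: "e \<noteq> Phi z \<Longrightarrow> ns_sig H z e = e \<or> ns_sig H z e = Phi z"
  by (auto simp: ns_sig_def sw_def)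

lemma z_step:
  assumes H: "looped_simple_graph H" and tc: "transverse_circuit H C" and z: "z \<in> verts H"
    and nz: "Phi z \<notin> C"
  shows "transverse_circuit (nonsimple_lc H z) (ns_sig H z ` C) \<and> card (ns_sig H z ` C) = card C
         \<and> bad v (ns_sig H z ` C) \<subseteq> bad v C"
proof -
  have "\<forall>e\<in>C. ns_sig H z e = e \<or> is_phi (ns_sig H z e)"
  proof
    fix e assume "e \<in> C"
    then have "e \<noteq> Phi z" using nz by blast
    then show "ns_sig H z e = e \<or> is_phi (ns_sig H z e)" using ns_sig_cases[of e z H] by (auto simp: is_phi_def)
  qed
  then have "bad v (ns_sig H z ` C) \<subseteq> bad v C" by (rule bad_mono[OF ns_sig_props(2)])
  moreover have "transverse_circuit (nonsimple_lc H z) (ns_sig H z ` C) \<and> card (ns_sig H z ` C) = card C"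
    using tc_ns[OF H z] tc by blast
  ultimately show ?thesis by blast
qed

lemma big_step:
  assumes H: "looped_simple_graph H" and tc: "transverse_circuit H C" and y: "y \<in> verts H"
    and e: "e \<in> C" "vtx e = y" "ns_sig H y e = Phi y" "e \<noteq> Phi y"
  shows "transverse_circuit (nonsimple_lc H y) (ns_sig H y ` C) \<and> card (ns_sig H y ` C) = card C
         \<and> bad v (ns_sig H y ` C) \<subseteq> bad v C - {y}"
proof -
  have u: "f = e" if "f \<in> C" "vtx f = y" for f
    by (rule tc_uniq[OF H tc that(1) e(1)]) (simp add: that(2) e(2))
  have nz: "Phi y \<notin> C"
  proof
    assume "Phi y \<in> C"
    then have "Phi y = e" using u by simp
    then show False using e(4) by simp
  qed
  have "\<forall>f\<in>C. vtx f = y \<longrightarrow> is_phi (ns_sig H y f)"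
  proof (intro ballI impI)
    fix f assume "f \<in> C" "vtx f = y"
    then have "f = e" by (rule u)
    then show "is_phi (ns_sig H y f)" using e(3) by (simp add: is_phi_def)
  qed
  then have "y \<notin> bad v (ns_sig H y ` C)" by (rule bad_remove[OF ns_sig_props(2)])
  then show ?thesis using z_step[OF H tc y nz, of v] by blast
qed

lemma circ_sum:
  assumes H: "looped_simple_graph H" and tc: "transverse_circuit H C"
  shows "\<forall>u\<in>verts H. (\<Sum>e\<in>C. ias_col H e u) = 0"
proof -
  have fin: "finite C" by (rule tc_finite[OF H tc])
  have C: "ias_dependent H C" "\<forall>D. D \<subset> C \<longrightarrow> \<not> ias_dependent H D"
    using tc unfolding transverse_circuit_def ias_circuit_def by blast+
  obtain c where c1: "\<exists>e\<in>C. c e \<noteq> 0" and c2: "\<forall>u\<in>verts H. (\<Sum>e\<in>C. c e * ias_col H e u) = 0"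
    using C(1) unfolding ias_dependent_def by blast
  define D where "D = {e \<in> C. c e \<noteq> 0}"
  have DC: "D \<subseteq> C" by (simp add: D_def)
  have sD: "(\<Sum>e\<in>C. c e * ias_col H e u) = (\<Sum>e\<in>D. c e * ias_col H e u)" for u
    by (rule sum.mono_neutral_right[OF fin DC]) (simp add: D_def)
  have "ias_dependent H D"
    unfolding ias_dependent_def using c1 c2 sD by (auto simp: D_def)
  then have "D = C" using C(2) DC by blast
  then have "\<forall>e\<in>C. c e = 1" by (auto simp: D_def)
  then have "(\<Sum>e\<in>C. c e * ias_col H e u) = (\<Sum>e\<in>C. ias_col H e u)" for u
    by (intro sum.cong) auto
  then show ?thesis using c2 by simp
qed

lemma final:
  assumes H: "looped_simple_graph H" and tc: "transverse_circuit H C" and v: "v \<in> verts H"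
    and nb: "bad v C = {}"
  shows "degree H v = card C - 1"
proof -
  have fin: "finite C" by (rule tc_finite[OF H tc])
  have gr: "C \<subseteq> ground H" by (rule tc_ground[OF tc])
  have ph: "e \<in> C \<Longrightarrow> vtx e \<noteq> v \<Longrightarrow> is_phi e" for e
    using nb unfolding bad_def by blast
  have rows: "\<forall>u\<in>verts H. (\<Sum>e\<in>C. ias_col H e u) = 0" by (rule circ_sum[OF H tc])
  define S where "S = {w. Phi w \<in> C}"
  have CS: "C \<subseteq> insert e0 (Phi ` S)" if "e0 \<in> C" "\<not> is_phi e0" for e0
  proof
    fix e assume e: "e \<in> C"
    show "e \<in> insert e0 (Phi ` S)"
    proof (cases "is_phi e")
      case True then show ?thesis using e by (auto simp: is_phi_def S_def)
    next
      case False
      then have "vtx e = v" "vtx e0 = v" using ph e that by blast+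
      then have "e = e0" using tc_uniq[OF H tc e that(1)] by simp
      then show ?thesis by simp
    qed
  qed
  have ex: "\<exists>e0\<in>C. \<not> is_phi e0"
  proof (rule ccontr)
    assume "\<not> ?thesis"
    then have allphi: "\<forall>e\<in>C. is_phi e" by blast
    obtain e where "e \<in> C" using tc unfolding transverse_circuit_def ias_circuit_def ias_dependent_def by blast
    then obtain x where x: "Phi x \<in> C" using allphi is_phi_def by metis
    have xV: "x \<in> verts H" using gr x by (auto simp: ground_vtx)
    have sub: "C \<subseteq> insert (Chi v) (Phi ` S)" using allphi by (auto simp: is_phi_def S_def)
    have "(\<Sum>e\<in>C. 1 * ias_col H e x) = (if Chi v \<in> C then 1 * ias_col H (Chi v) x else 0) + (if Phi x \<in> C then 1 else 0)"
      by (rule row_val[OF fin sub]) simp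
    moreover have "Chi v \<notin> C" using allphi by (auto simp: is_phi_def)
    ultimately have "(\<Sum>e\<in>C. ias_col H e x) = 1" using x by simp
    then show False using rows xV by simp
  qed
  then obtain e0 where e0: "e0 \<in> C" "\<not> is_phi e0" by blast
  have e0v: "vtx e0 = v" using ph e0 by blast
  have e0cases: "e0 = Chi v \<or> e0 = Psi v" using e0 e0v by (cases e0) (auto simp: is_phi_def)
  have sub: "C \<subseteq> insert e0 (Phi ` S)" by (rule CS[OF e0])
  have nP: "e0 \<noteq> Phi x" for x using e0(2) by (auto simp: is_phi_def)
  have SV: "S \<subseteq> verts H" using gr by (auto simp: S_def ground_vtx)
  have vS: "v \<notin> S"
  proof
    assume "v \<in> S"
    then have "Phi v \<in> C" by (simp add: S_def)
    then have "Phi v = e0" using tc_uniq[OF H tc _ e0(1)] e0v by simp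
    then show False using nP[of v] by simp
  qed
  have amatS: "amat H u v \<longleftrightarrow> u \<in> S" if u: "u \<in> verts H" "u \<noteq> v" for u
  proof -
    have "(\<Sum>e\<in>C. 1 * ias_col H e u) = (if e0 \<in> C then 1 * ias_col H e0 u else 0) + (if Phi u \<in> C then 1 else 0)"
      by (rule row_val[OF fin sub nP])
    then have "ias_col H e0 u + b (u \<in> S) = 0" using rows u(1) e0(1) by (simp add: S_def b_def)
    moreover have "ias_col H e0 u = b (amat H u v)" using e0cases u(2) by auto
    ultimately show ?thesis by (simp add: b_def split: if_splits)
  qed
  have N: "nbhd H v = S"
  proof (intro set_eqI iffI)
    fix w assume "w \<in> nbhd H v"
    then have "v \<noteq> w" "amat H v w" by (auto simp: nbhd_iff)
    then show "w \<in> S" using amatS[of w] lsg_in[OF H] lsg_sym[OF H, of v w] by blast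
  next
    fix w assume w: "w \<in> S"
    then have "w \<noteq> v" "w \<in> verts H" using vS SV by auto
    then show "w \<in> nbhd H v" using amatS[of w] w lsg_sym[OF H, of v w] by (auto simp: nbhd_iff)
  qed
  have "C = insert e0 (Phi ` S)" using sub e0(1) by (auto simp: S_def)
  moreover have "finite S" using SV H finite_subset by (auto simp: looped_simple_graph_def)
  ultimately have "card C = card S + 1" using nP by (simp add: card_image inj_on_def image_iff)
  then show ?thesis using N by (simp add: degree_def)
qed

lemma ns_sig_other: "vtx e \<noteq> z \<Longrightarrow> ns_sig H z e = e"
  by (cases e) (auto simp: ns_sig_def sw_def)

lemma fwd:
  assumes "looped_simple_graph H" "transverse_circuit H C" "v \<in> verts H"
  shows "\<exists>H'. locally_equivalent H H' \<and> looped_simple_graph H' \<and> (\<exists>w\<in>verts H'. degree H' w = card C - 1)"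
  using assms
proof (induction "card (bad v C)" arbitrary: H C rule: less_induct)
  case less
  note H = less.prems(1) and tc = less.prems(2) and v = less.prems(3)
  show ?case
  proof (cases "bad v C = {}")
    case True
    then show ?thesis using final[OF H tc v True] H v locally_equivalent.refl by blast
  next
    case False
    then obtain y where y: "y \<in> bad v C" by blast
    then obtain e where e: "e \<in> C" "vtx e = y" "y \<noteq> v" "\<not> is_phi e" unfolding bad_def by blast
    have yV: "y \<in> verts H" using tc_ground[OF tc] e ground_vtx by blast
    have finb: "finite (bad v C)" unfolding bad_def using tc_finite[OF H tc] by simp
    have e_cases: "e = Chi y \<or> e = Psi y" using e by (cases e) (auto simp: is_phi_def)
    have enP: "e \<noteq> Phi y" using e(4) by (auto simp: is_phi_def)
    have reduce: "\<exists>H'. locally_equivalent H H' \<and> looped_simple_graph H' \<and> (\<exists>w\<in>verts H'. degree H' w = card C - 1)"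
      if le2: "locally_equivalent H H2" and H2: "looped_simple_graph H2" and tc2: "transverse_circuit H2 C2"
        and cd: "card C2 = card C" and bd: "bad v C2 \<subseteq> bad v C - {y}" for H2 C2
    proof -
      have "bad v C2 \<subset> bad v C" using bd y by blast
      then have lt: "card (bad v C2) < card (bad v C)" using finb by (rule psubset_card_mono[rotated])
      have v2: "v \<in> verts H2" using le_lsg[OF le2 H] v by simp
      obtain H' where H': "locally_equivalent H2 H'" "looped_simple_graph H'" "\<exists>w\<in>verts H'. degree H' w = card C2 - 1"
        using less.hyps[OF lt H2 tc2 v2] by blast
      then show ?thesis using le_trans[OF H'(1) le2] cd by metis
    qed
    show ?thesis
    proof (cases "ns_sig H y e = Phi y")
      case True
      have st: "transverse_circuit (nonsimple_lc H y) (ns_sig H y ` C) \<and> card (ns_sig H y ` C) = card C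
         \<and> bad v (ns_sig H y ` C) \<subseteq> bad v C - {y}" by (rule big_step[OF H tc yV e(1,2) True enP])
      show ?thesis
        using reduce[OF locally_equivalent.nsimp[OF locally_equivalent.refl yV] lsg_ops(3)[OF H yV]
            conjunct1[OF st] conjunct1[OF conjunct2[OF st]] conjunct2[OF conjunct2[OF st]]] .
    next
      case False
      have small: "e = c0of H y" using False e_cases by (auto simp: ns_sig_def sw_def c0of_def)
      show ?thesis
      proof (cases "\<forall>z\<in>nbhd H y. Phi z \<in> C")
        case True
        define D where "D = insert e (Phi ` nbhd H y)"
        have nc: "transverse_circuit H D \<and> card D = degree H y + 1"
          using nbhd_circuit[OF H yV] small by (simp add: D_def)
        have DC: "D \<subseteq> C" using True e(1) by (auto simp: D_def)
        have "ias_dependent H D" using nc unfolding transverse_circuit_def ias_circuit_def by blast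
        then have "D = C" using DC tc unfolding transverse_circuit_def ias_circuit_def by blast
        then have "degree H y = card C - 1" using nc by simp
        then show ?thesis using H yV locally_equivalent.refl by blast
      next
        case False
        then obtain z where z: "z \<in> nbhd H y" "Phi z \<notin> C" by blast
        have zV: "z \<in> verts H" using lsg_finite_nbhd[OF H] z(1) by blast
        have zy: "z \<noteq> y" and ayz: "amat H y z" using z(1) by (auto simp: nbhd_iff)
        have yz: "y \<in> nbhd H z" using zy ayz lsg_sym[OF H, of y z] by (auto simp: nbhd_iff)
        define H1 where "H1 = nonsimple_lc H z"
        define C1 where "C1 = ns_sig H z ` C"
        have s1: "transverse_circuit H1 C1 \<and> card C1 = card C \<and> bad v C1 \<subseteq> bad v C"
          unfolding H1_def C1_def by (rule z_step[OF H tc zV z(2)])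
        have H1: "looped_simple_graph H1" unfolding H1_def by (rule lsg_ops(3)[OF H zV])
        have yV1: "y \<in> verts H1" using yV by (simp add: H1_def)
        have eC1: "e \<in> C1" using e(1,2) zy ns_sig_other[of e z H] unfolding C1_def by (metis image_eqI)
        have loop1: "amat H1 y y = (\<not> amat H y y)" using yz by (simp add: H1_def amat_ops)
        have big1: "ns_sig H1 y e = Phi y" using small loop1 by (auto simp: ns_sig_def sw_def c0of_def)
        have s2: "transverse_circuit (nonsimple_lc H1 y) (ns_sig H1 y ` C1) \<and> card (ns_sig H1 y ` C1) = card C1
           \<and> bad v (ns_sig H1 y ` C1) \<subseteq> bad v C1 - {y}"
          by (rule big_step[OF H1 _ yV1 eC1 e(2) big1 enP]) (use s1 in blast)
        have le2: "locally_equivalent H (nonsimple_lc H1 y)"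
          unfolding H1_def
          by (rule locally_equivalent.nsimp[OF locally_equivalent.nsimp[OF locally_equivalent.refl zV]])
             (use yV in simp)
        show ?thesis
        proof -
          have "bad v (ns_sig H1 y ` C1) \<subseteq> bad v C - {y}" using s1 s2 by blast
          moreover have "card (ns_sig H1 y ` C1) = card C" using s1 s2 by simp
          ultimately show ?thesis
            using reduce[OF le2 lsg_ops(3)[OF H1 yV1] conjunct1[OF s2]] by blast
        qed
      qed
    qed
  qed
qed

theorem corollary1p4:
  fixes G :: "'a lgraph" and k :: nat
  assumes "looped_simple_graph G" and "k > 0"
  shows "(\<exists>C. transverse_circuit G C \<and> card C = k) \<longleftrightarrow>
         (\<exists>H. locally_equivalent G H \<and> looped_simple_graph H \<and>
              (\<exists>v \<in> verts H. degree H v = k - 1))"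
proof
  assume "\<exists>C. transverse_circuit G C \<and> card C = k"
  then obtain C where C: "transverse_circuit G C" "card C = k" by blast
  then have "C \<noteq> {}" using assms(2) by auto
  then obtain e where e: "e \<in> C" by blast
  have "vtx e \<in> verts G" using tc_ground[OF C(1)] e ground_vtx by blast
  from fwd[OF assms(1) C(1) this] show "\<exists>H. locally_equivalent G H \<and> looped_simple_graph H \<and>
              (\<exists>v \<in> verts H. degree H v = k - 1)" using C(2) by blast
next
  assume "\<exists>H. locally_equivalent G H \<and> looped_simple_graph H \<and> (\<exists>v \<in> verts H. degree H v = k - 1)"
  then obtain H v where H: "locally_equivalent G H" "looped_simple_graph H" "v \<in> verts H" "degree H v = k - 1"
    by blast
  have nc: "transverse_circuit H (insert (c0of H v) (Phi ` nbhd H v)) \<and>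
         card (insert (c0of H v) (Phi ` nbhd H v)) = degree H v + 1" by (rule nbhd_circuit[OF H(2,3)])
  then have "card (insert (c0of H v) (Phi ` nbhd H v)) = k" using H(4) assms(2) by simp
  then show "\<exists>C. transverse_circuit G C \<and> card C = k"
    using le_back[OF H(1) assms(1)] nc by metis
qed

end
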